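(* Let $p$ be a prime and $G$ a finite $p$-group with $|G'\cap Z(G)|=p$ and $|G'|=p^2$. Then $Z(G)^*\cap Z(C_G(G'))=G'Z(G)$.
   Context: $G'$ is the commutator subgroup, $Z(\cdot)$ the center, $C_G(G')$ the centralizer of $G'$ in $G$. Commutators are $[x,y]=xyx^{-1}y^{-1}$; for $x\in G$, $[G,x]=\{[y,x]: y\in G\}$; and $Z(G)^*=\{x\in G : [G,x]\subseteq Z(G)\}$. *)

theory Defs
  imports "HOL-Algebra.Algebra"
begin

text \<open>Commutator [x,y] = x y x^-1 y^-1 (same convention as HOL-Algebra's derived_set).\<close>
definition commutator :: "('a, 'b) monoid_scheme \<Rightarrow> 'a \<Rightarrow> 'a \<Rightarrow> 'a" where
  "commutator G x y = x \<otimes>\<^bsub>G\<^esub> y \<otimes>\<^bsub>G\<^esub> inv\<^bsub>G\<^esub> x \<otimes>\<^bsub>G\<^esub> inv\<^bsub>G\<^esub> y"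

abbreviation commutator_subgroup :: "('a, 'b) monoid_scheme \<Rightarrow> 'a set" where
  "commutator_subgroup G \<equiv> derived G (carrier G)"

definition center_of :: "('a, 'b) monoid_scheme \<Rightarrow> 'a set \<Rightarrow> 'a set" where
  "center_of G H = {x \<in> H. \<forall>y \<in> H. x \<otimes>\<^bsub>G\<^esub> y = y \<otimes>\<^bsub>G\<^esub> x}"

abbreviation center :: "('a, 'b) monoid_scheme \<Rightarrow> 'a set" where
  "center G \<equiv> center_of G (carrier G)"

definition centralizer :: "('a, 'b) monoid_scheme \<Rightarrow> 'a set \<Rightarrow> 'a set" where
  "centralizer G S = {x \<in> carrier G. \<forall>y \<in> S. x \<otimes>\<^bsub>G\<^esub> y = y \<otimes>\<^bsub>G\<^esub> x}"

definition comm_set :: "('a, 'b) monoid_scheme \<Rightarrow> 'a \<Rightarrow> 'a set" where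
  "comm_set G x = {commutator G y x | y. y \<in> carrier G}"

definition center_star :: "('a, 'b) monoid_scheme \<Rightarrow> 'a set" where
  "center_star G = {x \<in> carrier G. comm_set G x \<subseteq> center G}"

definition p_group :: "nat \<Rightarrow> ('a, 'b) monoid_scheme \<Rightarrow> bool" where
  "p_group p G \<longleftrightarrow> group G \<and> finite (carrier G) \<and> (\<exists>n. order G = p ^ n)"

end

theory Submission imports Defs
begin

lemma fermat_step:
  assumes p: "Factorial_Ring.prime (p::nat)"
  shows "\<exists>q. (s + 1) ^ p = s ^ p + 1 + p * q"
proof -
  have p0: "p > 0" using p prime_gt_0_nat by blast
  define f where "f k = (p choose k) * s ^ k" for k
  have "(s + 1) ^ p = (\<Sum>k\<le>p. f k)"
    unfolding f_def binomial by simp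
  also have "{..p} = insert 0 (insert p {1..<p})" using p0 by auto
  also have "(\<Sum>k\<in>insert 0 (insert p {1..<p}). f k) = f 0 + (f p + (\<Sum>k\<in>{1..<p}. f k))"
    using p0 by (simp add: sum.insert)
  finally have e: "(s + 1) ^ p = 1 + (s ^ p + (\<Sum>k\<in>{1..<p}. f k))" by (simp add: f_def)
  have "p dvd (\<Sum>k\<in>{1..<p}. f k)"
    unfolding f_def by (rule dvd_sum) (use p p0 in \<open>auto intro!: dvd_mult2 dvd_choose_prime\<close>)
  then obtain q where "(\<Sum>k\<in>{1..<p}. f k) = p * q" by blast
  with e show ?thesis by auto
qed

lemma fermat_nat:
  assumes p: "Factorial_Ring.prime (p::nat)"
  shows "s ^ p mod p = s mod p"
proof (induction s)
  case 0 then show ?case using p prime_gt_0_nat by (simp add: zero_power)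
next
  case (Suc s)
  obtain q where q: "(s + 1) ^ p = s ^ p + 1 + p * q" using fermat_step[OF p] by blast
  have "Suc s ^ p mod p = (s ^ p + 1) mod p" using q by simp
  also have "\<dots> = (s ^ p mod p + 1) mod p" by (simp add: mod_Suc_eq)
  also have "\<dots> = (s mod p + 1) mod p" using Suc by simp
  also have "\<dots> = Suc s mod p" by (simp add: mod_Suc_eq)
  finally show ?case .
qed

lemma fermat_iter:
  assumes p: "Factorial_Ring.prime (p::nat)"
  shows "s ^ (p ^ n) mod p = s mod p"
proof (induction n)
  case 0 then show ?case by simp
next
  case (Suc n)
  have "s ^ (p ^ Suc n) = (s ^ (p ^ n)) ^ p" by (metis power_Suc2 power_mult)
  hence "s ^ (p ^ Suc n) mod p = (s ^ (p ^ n)) mod p" using fermat_nat[OF p] by simp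
  with Suc show ?case by simp
qed

lemma fermat_one:
  assumes p: "Factorial_Ring.prime (p::nat)" and s: "1 \<le> s" "s < p" and d: "p dvd s ^ (p ^ n) - 1"
  shows "s = 1"
proof -
  have p1: "p > 1" using p prime_gt_1_nat by blast
  have "s ^ (p ^ n) \<ge> 1" using s by simp
  then have "s ^ (p ^ n) mod p = 1 mod p" using d
    by (metis dvd_minus_mod le_add_diff_inverse2 mod_add_left_eq mod_mod_trivial dvd_imp_mod_0 add.commute add_0 mod_add_self2)
  then have "s mod p = 1" using fermat_iter[OF p] p1 by simp
  with s show ?thesis by simp
qed


context group begin

lemma sub_pow_closed: "subgroup H G \<Longrightarrow> x \<in> H \<Longrightarrow> x [^] (n::nat) \<in> H"
  by (induction n) (auto simp: subgroup.one_closed subgroup.m_closed)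

lemma center_comm: "z \<in> center G \<Longrightarrow> w \<in> carrier G \<Longrightarrow> z \<otimes> w = w \<otimes> z"
  unfolding center_of_def by blast

lemma center_carr: "z \<in> center G \<Longrightarrow> z \<in> carrier G"
  unfolding center_of_def by blast

lemma center_I: "z \<in> carrier G \<Longrightarrow> (\<And>w. w \<in> carrier G \<Longrightarrow> z \<otimes> w = w \<otimes> z) \<Longrightarrow> z \<in> center G"
  unfolding center_of_def by blast

lemma center_closed:
  assumes "z \<in> center G" "w \<in> center G"
  shows "z \<otimes> w \<in> center G" "inv z \<in> center G" "z [^] (n::nat) \<in> center G"
proof -
  have zc: "z \<in> carrier G" and wc: "w \<in> carrier G" using assms center_carr by blast+
  show "z \<otimes> w \<in> center G"
  proof (rule center_I)
    fix y assume y: "y \<in> carrier G"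
    have "z \<otimes> w \<otimes> y = z \<otimes> (w \<otimes> y)" using zc wc y by (simp only: m_assoc)
    also have "\<dots> = z \<otimes> (y \<otimes> w)" using center_comm[OF assms(2) y] by simp
    also have "\<dots> = (z \<otimes> y) \<otimes> w" using zc wc y by (simp only: m_assoc)
    also have "\<dots> = (y \<otimes> z) \<otimes> w" using center_comm[OF assms(1) y] by simp
    also have "\<dots> = y \<otimes> (z \<otimes> w)" using zc wc y by (simp only: m_assoc)
    finally show "z \<otimes> w \<otimes> y = y \<otimes> (z \<otimes> w)" .
  qed (use zc wc in simp)
  show "inv z \<in> center G"
  proof (rule center_I)
    fix y assume y: "y \<in> carrier G"
    have "inv z \<otimes> y = inv (inv y \<otimes> z)" using zc y by (simp add: inv_mult_group)
    also have "\<dots> = inv (z \<otimes> inv y)" using center_comm[OF assms(1) inv_closed[OF y]] by simp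
    also have "\<dots> = y \<otimes> inv z" using zc y by (simp add: inv_mult_group)
    finally show "inv z \<otimes> y = y \<otimes> inv z" .
  qed (use zc in simp)
  show "z [^] (n::nat) \<in> center G"
  proof (rule center_I)
    fix y assume y: "y \<in> carrier G"
    show "z [^] n \<otimes> y = y \<otimes> z [^] n"
      by (rule group_commutes_pow[OF center_comm[OF assms(1) y] zc y])
  qed (use zc in simp)
qed

lemma cancel1: "g \<in> carrier G \<Longrightarrow> y \<in> carrier G \<Longrightarrow> inv g \<otimes> (g \<otimes> y) = y"
  by (simp add: m_assoc[symmetric])
lemma cancel2: "g \<in> carrier G \<Longrightarrow> y \<in> carrier G \<Longrightarrow> g \<otimes> (inv g \<otimes> y) = y"
  by (simp add: m_assoc[symmetric])

lemma conj_pow: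
  assumes "g \<in> carrier G" "x \<in> carrier G"
  shows "g \<otimes> x [^] (k::nat) \<otimes> inv g = (g \<otimes> x \<otimes> inv g) [^] k"
proof (induction k)
  case 0 then show ?case using assms by simp
next
  case (Suc k)
  have "g \<otimes> x [^] Suc k \<otimes> inv g = (g \<otimes> x [^] k \<otimes> inv g) \<otimes> (g \<otimes> x \<otimes> inv g)"
    using assms by (simp add: m_assoc cancel1)
  also have "\<dots> = (g \<otimes> x \<otimes> inv g) [^] k \<otimes> (g \<otimes> x \<otimes> inv g)" by (simp only: Suc.IH)
  also have "\<dots> = (g \<otimes> x \<otimes> inv g) [^] Suc k" by (simp only: nat_pow_Suc)
  finally show ?case .
qed

lemma conj_iter:
  assumes "g \<in> carrier G" "x \<in> carrier G" "e \<in> center G" "g \<otimes> x \<otimes> inv g = e \<otimes> x"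
  shows "g [^] (j::nat) \<otimes> x \<otimes> inv (g [^] j) = e [^] j \<otimes> x"
proof (induction j)
  case 0 then show ?case using assms(1,2) by simp
next
  case (Suc j)
  have ec: "e \<in> carrier G" using center_carr[OF assms(3)] .
  have h: "g \<otimes> (x \<otimes> (inv g \<otimes> w)) = e \<otimes> (x \<otimes> w)" if w: "w \<in> carrier G" for w
  proof -
    have "g \<otimes> (x \<otimes> (inv g \<otimes> w)) = (g \<otimes> x \<otimes> inv g) \<otimes> w" using assms(1,2) w by (simp add: m_assoc)
    also have "\<dots> = (e \<otimes> x) \<otimes> w" by (simp only: assms(4))
    finally show ?thesis using assms(1,2) w ec by (simp add: m_assoc)
  qed
  have "g [^] Suc j \<otimes> x \<otimes> inv (g [^] Suc j) = g [^] j \<otimes> (e \<otimes> x) \<otimes> inv (g [^] j)"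
  proof -
    have i: "inv (g [^] Suc j) = inv g \<otimes> inv (g [^] j)"
      by (simp only: nat_pow_Suc inv_mult_group[OF nat_pow_closed[OF assms(1)] assms(1)])
    have "g [^] Suc j \<otimes> x \<otimes> inv (g [^] Suc j) = g [^] j \<otimes> (g \<otimes> (x \<otimes> (inv g \<otimes> inv (g [^] j))))"
      unfolding i using assms(1,2) by (simp only: nat_pow_Suc m_assoc nat_pow_closed inv_closed m_closed)
    also have "\<dots> = g [^] j \<otimes> (e \<otimes> (x \<otimes> inv (g [^] j)))" using assms(1) by (simp add: h)
    finally show ?thesis using assms(1,2) ec by (simp add: m_assoc)
  qed
  also have "\<dots> = e \<otimes> (g [^] j \<otimes> x \<otimes> inv (g [^] j))"
  proof -
    have c: "g [^] j \<otimes> e = e \<otimes> g [^] j" using center_comm[OF assms(3), of "g [^] j"] assms(1) by simp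
    show ?thesis using assms(1,2) ec by (simp add: m_assoc[symmetric] c)
  qed
  also have "\<dots> = e \<otimes> (e [^] j \<otimes> x)" by (simp only: Suc.IH)
  also have "\<dots> = e [^] Suc j \<otimes> x" using ec assms(2)
    by (simp only: nat_pow_Suc2[OF ec] m_assoc[OF ec nat_pow_closed[OF ec] assms(2)])
  finally show ?case .
qed

lemma pow_central:
  assumes "e \<in> center G" "a \<in> carrier G"
  shows "(e \<otimes> a) [^] (k::nat) = e [^] k \<otimes> a [^] k"
  by (rule pow_mult_distrib[OF center_comm[OF assms] center_carr[OF assms(1)] assms(2)])


lemma conj_mult_l:
  "g \<in> carrier G \<Longrightarrow> h \<in> carrier G \<Longrightarrow> x \<in> carrier G \<Longrightarrow>
   (g \<otimes> h) \<otimes> x \<otimes> inv (g \<otimes> h) = g \<otimes> (h \<otimes> x \<otimes> inv h) \<otimes> inv g"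
  by (simp add: m_assoc inv_mult_group)

lemma conj_mult_r:
  "g \<in> carrier G \<Longrightarrow> x \<in> carrier G \<Longrightarrow> y \<in> carrier G \<Longrightarrow>
   g \<otimes> (x \<otimes> y) \<otimes> inv g = (g \<otimes> x \<otimes> inv g) \<otimes> (g \<otimes> y \<otimes> inv g)"
  by (simp add: m_assoc cancel1)

lemma conj_inv:
  "g \<in> carrier G \<Longrightarrow> x \<in> carrier G \<Longrightarrow> g \<otimes> inv x \<otimes> inv g = inv (g \<otimes> x \<otimes> inv g)"
  by (simp add: inv_mult_group m_assoc)

lemma conj_fix_iff:
  assumes "g \<in> carrier G" "x \<in> carrier G"
  shows "g \<otimes> x \<otimes> inv g = x \<longleftrightarrow> g \<otimes> x = x \<otimes> g"
proof
  assume h: "g \<otimes> x \<otimes> inv g = x"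
  have "g \<otimes> x = g \<otimes> x \<otimes> inv g \<otimes> g" using assms by (simp add: m_assoc)
  also have "\<dots> = x \<otimes> g" by (simp only: h)
  finally show "g \<otimes> x = x \<otimes> g" .
next
  assume h: "g \<otimes> x = x \<otimes> g"
  have "g \<otimes> x \<otimes> inv g = x \<otimes> g \<otimes> inv g" by (simp only: h)
  also have "\<dots> = x" using assms by (simp add: m_assoc)
  finally show "g \<otimes> x \<otimes> inv g = x" .
qed

lemma conj_center:
  assumes "e \<in> center G" "g \<in> carrier G"
  shows "g \<otimes> e \<otimes> inv g = e"
  using conj_fix_iff[OF assms(2) center_carr[OF assms(1)]] center_comm[OF assms] by simp

lemma conj_center_mult:
  assumes "e \<in> center G" "g \<in> carrier G" "x \<in> carrier G"
  shows "g \<otimes> (e \<otimes> x) \<otimes> inv g = e \<otimes> (g \<otimes> x \<otimes> inv g)"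
  using conj_mult_r[OF assms(2) center_carr[OF assms(1)] assms(3)] conj_center[OF assms(1,2)] by simp

lemma comm_to_conj:
  assumes "g \<in> carrier G" "x \<in> carrier G" "c \<in> carrier G" "g \<otimes> x \<otimes> inv g \<otimes> inv x = c"
  shows "g \<otimes> x \<otimes> inv g = c \<otimes> x"
proof -
  have "g \<otimes> x \<otimes> inv g = (g \<otimes> x \<otimes> inv g \<otimes> inv x) \<otimes> x" using assms(1,2) by (simp add: m_assoc)
  then show ?thesis by (simp only: assms(4))
qed

lemma conj_to_comm:
  assumes "g \<in> carrier G" "x \<in> carrier G" "c \<in> carrier G" "g \<otimes> x \<otimes> inv g = c \<otimes> x"
  shows "g \<otimes> x \<otimes> inv g \<otimes> inv x = c"
proof -
  have "g \<otimes> x \<otimes> inv g \<otimes> inv x = c \<otimes> x \<otimes> inv x" by (simp only: assms(4))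
  then show ?thesis using assms(2,3) by (simp add: m_assoc)
qed


lemma comm_mult_g:
  assumes "x \<in> carrier G" "y \<in> carrier G" "w \<in> carrier G" "x \<otimes> w = w \<otimes> x" "y \<otimes> w = w \<otimes> y"
  shows "(x \<otimes> y) \<otimes> w = w \<otimes> (x \<otimes> y)"
proof -
  have "(x \<otimes> y) \<otimes> w = x \<otimes> (y \<otimes> w)" using assms(1-3) by (simp add: m_assoc)
  also have "\<dots> = x \<otimes> (w \<otimes> y)" by (simp only: assms(5))
  also have "\<dots> = (x \<otimes> w) \<otimes> y" using assms(1-3) by (simp add: m_assoc)
  also have "\<dots> = (w \<otimes> x) \<otimes> y" by (simp only: assms(4))
  also have "\<dots> = w \<otimes> (x \<otimes> y)" using assms(1-3) by (simp add: m_assoc)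
  finally show ?thesis .
qed

lemma central_rearr:
  assumes "e \<in> center G" "f \<in> center G" "x \<in> carrier G"
  shows "e \<otimes> (f \<otimes> x) = x \<otimes> (e \<otimes> f)"
proof -
  have "e \<otimes> (f \<otimes> x) = (e \<otimes> f) \<otimes> x" using assms center_carr by (simp add: m_assoc)
  also have "\<dots> = x \<otimes> (e \<otimes> f)" using center_comm[OF center_closed(1)[OF assms(1,2)] assms(3)] .
  finally show ?thesis .
qed

end


locale L3 = group G for G (structure) +
  fixes p n :: nat
  assumes pp: "Factorial_Ring.prime p" and fin: "finite (carrier G)" and ordG: "order G = p ^ n"
    and cN: "card (derived G (carrier G) \<inter> center G) = p"
    and cD: "card (derived G (carrier G)) = p ^ 2"
begin

abbreviation "D \<equiv> derived G (carrier G)"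
abbreviation "N \<equiv> D \<inter> center G"

lemma p1: "p > 1" using pp prime_gt_1_nat by blast

lemma subD: "subgroup D G" by (rule derived_is_subgroup) simp

lemma Dcar: "D \<subseteq> carrier G" using subD subgroup.subset by blast

lemma finD: "finite D" using Dcar fin finite_subset by blast

lemma finN: "finite N" using finD by simp

lemma comm_D: "x \<in> carrier G \<Longrightarrow> y \<in> carrier G \<Longrightarrow> x \<otimes> y \<otimes> inv x \<otimes> inv y \<in> D"
  unfolding derived_def by (rule generate.incl) blast

lemma N_one: "\<one> \<in> N"
  using subgroup.one_closed[OF subD] center_I[of "\<one>"] by simp

lemma N_mult: "z \<in> N \<Longrightarrow> w \<in> N \<Longrightarrow> z \<otimes> w \<in> N"
  using subgroup.m_closed[OF subD] center_closed(1) by blast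

lemma N_inv: "z \<in> N \<Longrightarrow> inv z \<in> N"
  using subgroup.m_inv_closed[OF subD] center_closed(2) by blast

lemma N_pow: "z \<in> N \<Longrightarrow> z [^] (i::nat) \<in> N"
  using sub_pow_closed[OF subD] center_closed(3) by blast

lemma N_car: "z \<in> N \<Longrightarrow> z \<in> carrier G" using Dcar by blast

lemma N_cen: "z \<in> N \<Longrightarrow> z \<in> center G" by blast

lemma pow_pn: "x \<in> carrier G \<Longrightarrow> x [^] (p ^ n) = \<one>"
  using pow_order_eq_1 ordG by metis

lemma pow_inj:
  assumes c: "c \<in> carrier G" "c \<noteq> \<one>" and ij: "i < p" "j < p" "i \<le> j" and eq: "c [^] i = c [^] j"
  shows "i = j"
proof (rule ccontr)
  assume ne: "i \<noteq> j"
  have "c [^] i \<otimes> \<one> = c [^] i \<otimes> c [^] (j - i)"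
    using eq nat_pow_mult[OF c(1), of i "j - i"] ij c by simp
  then have "c [^] (j - i) = \<one>" using c by (metis l_cancel nat_pow_closed one_closed)
  then have d1: "ord c dvd (j - i)" using pow_eq_id c by blast
  have "ord c dvd p ^ n" using ord_dvd_group_order[OF c(1)] ordG by simp
  then obtain k where k: "k \<le> n" "ord c = p ^ k" using divides_primepow_nat[OF pp] by blast
  have "k \<noteq> 0"
  proof
    assume "k = 0"
    then have "c [^] (1::nat) = \<one>" using pow_eq_id[OF c(1), of 1] k by simp
    then show False using c by simp
  qed
  then have "p dvd ord c" using k by simp
  then have "p dvd (j - i)" using d1 by (rule dvd_trans)
  moreover have "0 < j - i" "j - i < p" using ij ne by auto
  ultimately show False by (simp add: nat_dvd_not_less)
qed

lemma N_gen:
  assumes c: "c \<in> N" "c \<noteq> \<one>" and z: "z \<in> N"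
  shows "\<exists>i<p. z = c [^] i"
proof -
  have inj: "inj_on (\<lambda>i. c [^] i) {..<p}"
  proof (rule inj_onI)
    fix i j assume "i \<in> {..<p}" "j \<in> {..<p}" "c [^] i = c [^] j"
    then show "i = j" using pow_inj[of c i j] pow_inj[of c j i] N_car[OF c(1)] c(2)
      by (cases "i \<le> j") auto
  qed
  have sub: "(\<lambda>i. c [^] i) ` {..<p} \<subseteq> N" using N_pow[OF c(1)] by blast
  have "card ((\<lambda>i. c [^] i) ` {..<p}) = p" using card_image[OF inj] by simp
  then have "(\<lambda>i. c [^] i) ` {..<p} = N" using card_subset_eq[OF finN sub] cN by simp
  then show ?thesis using z by auto
qed

lemma exists_a: "\<exists>a. a \<in> D \<and> a \<notin> center G"
proof (rule ccontr)
  assume "\<not> ?thesis"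
  then have "D = N" by blast
  then have "p ^ 2 = p" using cN cD by simp
  then show False using p1 by (simp add: power2_eq_square)
qed

end


locale L3a = L3 +
  fixes a assumes aD: "a \<in> D" and aZ: "a \<notin> center G"
begin

lemma ac: "a \<in> carrier G" using aD Dcar by blast

definition m :: nat where "m = (LEAST m::nat. 0 < m \<and> a [^] m \<in> N)"

lemma m_prop: "0 < m \<and> a [^] m \<in> N"
proof -
  have "order G > 0" using ordG p1 by simp
  moreover have "a [^] order G \<in> N" using pow_order_eq_1[OF ac] N_one by simp
  ultimately have "0 < order G \<and> a [^] order G \<in> N" by blast
  then show ?thesis unfolding m_def by (rule LeastI)
qed

lemma m_min: "0 < k \<Longrightarrow> k < m \<Longrightarrow> a [^] k \<notin> N"
  unfolding m_def using not_less_Least by blast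

lemma powN_iff: "a [^] (i::nat) \<in> N \<longleftrightarrow> m dvd i"
proof
  assume "m dvd i"
  then obtain q where "i = m * q" by blast
  moreover have "(a [^] m) [^] q = a [^] (m * q)" by (rule nat_pow_pow[OF ac])
  ultimately have "a [^] i = (a [^] m) [^] q" by simp
  then show "a [^] i \<in> N" using N_pow m_prop by simp
next
  assume ai: "a [^] i \<in> N"
  define q r where "q = i div m" and "r = i mod m"
  have i: "i = m * q + r" unfolding q_def r_def by simp
  have "a [^] i = a [^] (m * q) \<otimes> a [^] r" using i nat_pow_mult[OF ac] by simp
  then have "a [^] r = inv (a [^] (m * q)) \<otimes> a [^] i" using ac
    by (simp add: cancel1)
  moreover have "a [^] (m * q) \<in> N" using nat_pow_pow[OF ac, of m q] N_pow m_prop by metis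
  ultimately have "a [^] r \<in> N" using ai N_inv N_mult by simp
  moreover have "r < m" unfolding r_def using m_prop by simp
  ultimately have "r = 0" using m_min by blast
  then show "m dvd i" unfolding r_def by (rule mod_0_imp_dvd)
qed

lemma inj_aux:
  fixes i j :: nat
  assumes "i < m" "j < m" "i \<le> j" "z \<in> N" "w \<in> N" "a [^] i \<otimes> z = a [^] j \<otimes> w"
  shows "i = j \<and> z = w"
proof -
  have zc: "z \<in> carrier G" and wc: "w \<in> carrier G" using assms N_car by auto
  have aj: "a [^] j = a [^] i \<otimes> a [^] (j - i)"
    using nat_pow_mult[OF ac, of i "j - i"] assms(3) by simp
  have "a [^] i \<otimes> z = a [^] j \<otimes> w" by (rule assms(6))
  also have "\<dots> = (a [^] i \<otimes> a [^] (j - i)) \<otimes> w" by (simp only: aj)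
  also have "\<dots> = a [^] i \<otimes> (a [^] (j - i) \<otimes> w)" using ac wc by (simp add: m_assoc)
  finally have "a [^] i \<otimes> z = a [^] i \<otimes> (a [^] (j - i) \<otimes> w)" .
  then have e: "z = a [^] (j - i) \<otimes> w" using ac zc wc by (metis l_cancel nat_pow_closed m_closed)
  then have "a [^] (j - i) = z \<otimes> inv w" using ac wc by (simp add: m_assoc)
  then have "a [^] (j - i) \<in> N" using N_mult N_inv assms(4,5) by simp
  then have "m dvd (j - i)" using powN_iff by blast
  moreover have "j - i < m" using assms(2) by simp
  ultimately have "j - i = 0" using dvd_imp_le by (metis neq0_conv not_le)
  then have "i = j" using assms(3) by simp
  moreover then have "z = w" using e ac wc by simp
  ultimately show ?thesis by simp
qed

lemma inj_aux2:
  fixes i j :: nat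
  assumes "i < m" "j < m" "z \<in> N" "w \<in> N" "a [^] i \<otimes> z = a [^] j \<otimes> w"
  shows "i = j \<and> z = w"
proof (cases "i \<le> j")
  case True show ?thesis by (rule inj_aux[OF assms(1,2) True assms(3,4,5)])
next
  case False
  then have "j \<le> i" by simp
  from inj_aux[OF assms(2,1) this assms(4,3) assms(5)[symmetric]] show ?thesis by auto
qed

lemma inj_f: "inj_on (\<lambda>(i::nat, z). a [^] i \<otimes> z) ({..<m} \<times> N)"
proof (rule inj_onI)
  fix x y :: "nat \<times> 'a"
  assume hx: "x \<in> {..<m} \<times> N" and hy: "y \<in> {..<m} \<times> N"
    and e: "(\<lambda>(i::nat, z). a [^] i \<otimes> z) x = (\<lambda>(i::nat, z). a [^] i \<otimes> z) y"
  obtain i z where x: "x = (i, z)" by (cases x)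
  obtain j w where y: "y = (j, w)" by (cases y)
  have h1: "i < m" "z \<in> N" using hx x by auto
  have h2: "j < m" "w \<in> N" using hy y by auto
  have h3: "a [^] i \<otimes> z = a [^] j \<otimes> w" using e x y by simp
  have "i = j \<and> z = w" by (rule inj_aux2[OF h1(1) h2(1) h1(2) h2(2) h3])
  then show "x = y" using x y by simp
qed

lemma sub_f: "(\<lambda>(i::nat, z). a [^] i \<otimes> z) ` (A \<times> N) \<subseteq> D"
proof (rule subsetI)
  fix y assume "y \<in> (\<lambda>(i::nat, z). a [^] i \<otimes> z) ` (A \<times> N)"
  then obtain x where x: "x \<in> A \<times> N" "y = (\<lambda>(i::nat, z). a [^] i \<otimes> z) x" by (rule imageE)
  obtain i z where xi: "x = (i, z)" by (cases x)
  have "z \<in> N" "y = a [^] i \<otimes> z" using x xi by auto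
  then show "y \<in> D" using subgroup.m_closed[OF subD sub_pow_closed[OF subD aD, of i]] by blast
qed

lemma m_eq: "m = p"
proof -
  let ?f = "\<lambda>(i::nat, z). a [^] i \<otimes> z"
  have inj: "inj_on ?f ({..<m} \<times> N)" by (rule inj_f)
  have sub: "?f ` ({..<m} \<times> N) \<subseteq> D"
    by (rule sub_f)
  have "card (?f ` ({..<m} \<times> N)) = m * p" using card_image[OF inj] cN by (simp add: card_cartesian_product)
  moreover have "card (?f ` ({..<m} \<times> N)) \<le> p ^ 2" using card_mono[OF finD sub] cD by simp
  ultimately have "m * p \<le> p * p" by (simp add: power2_eq_square)
  then have mle: "m \<le> p" using p1 by simp
  have "a [^] (p ^ n) \<in> N" using pow_pn[OF ac] N_one by simp
  then have "m dvd p ^ n" using powN_iff by blast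
  then obtain k where k: "m = p ^ k" using divides_primepow_nat[OF pp] by blast
  have "m \<noteq> 1" using powN_iff[of 1] aZ ac by auto
  then have "k \<noteq> 0" using k by auto
  then have "p ^ 1 \<le> p ^ k" using p1 by (intro power_increasing) auto
  then have "p \<le> m" using k by simp
  with mle show ?thesis by simp
qed

lemma D_decomp: "d \<in> D \<Longrightarrow> \<exists>i<p. \<exists>z\<in>N. d = a [^] i \<otimes> z"
proof -
  assume d: "d \<in> D"
  let ?f = "\<lambda>(i::nat, z). a [^] i \<otimes> z"
  have inj: "inj_on ?f ({..<p} \<times> N)" using inj_f unfolding m_eq .
  have sub: "?f ` ({..<p} \<times> N) \<subseteq> D"
    by (rule sub_f)
  have "card (?f ` ({..<p} \<times> N)) = p ^ 2" using card_image[OF inj] cN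
    by (simp add: card_cartesian_product power2_eq_square)
  then have "?f ` ({..<p} \<times> N) = D" using card_subset_eq[OF finD sub] cD by simp
  then have "d \<in> ?f ` ({..<p} \<times> N)" using d by simp
  then obtain x where x: "x \<in> {..<p} \<times> N" "d = ?f x" by (rule imageE)
  obtain i z where xi: "x = (i, z)" by (cases x)
  have "i < p" "z \<in> N" "d = a [^] i \<otimes> z" using x xi by auto
  then show ?thesis by blast
qed


lemma conjD: "y \<in> carrier G \<Longrightarrow> y \<otimes> a \<otimes> inv y \<in> D"
proof -
  assume yc: "y \<in> carrier G"
  have "y \<otimes> a \<otimes> inv y = (y \<otimes> a \<otimes> inv y \<otimes> inv a) \<otimes> a" using yc ac by (simp add: m_assoc)
  then show ?thesis using subgroup.m_closed[OF subD comm_D[OF yc ac] aD] by simp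
qed

lemma K_a:
  assumes yc: "y \<in> carrier G"
  shows "\<exists>z\<in>N. y \<otimes> a \<otimes> inv y = a \<otimes> z"
proof -
  obtain s z where s: "s < p" "z \<in> N" and sz: "y \<otimes> a \<otimes> inv y = a [^] s \<otimes> z"
    using D_decomp[OF conjD[OF yc]] by blast
  have zc: "z \<in> carrier G" using s N_car by blast
  have zZ: "z \<in> center G" using s by blast
  have s0: "s \<noteq> 0"
  proof
    assume "s = 0"
    then have e: "y \<otimes> a \<otimes> inv y = z" using sz zc by simp
    have "a = inv y \<otimes> (y \<otimes> a \<otimes> inv y) \<otimes> inv (inv y)" using yc ac by (simp add: m_assoc cancel1)
    also have "\<dots> = inv y \<otimes> z \<otimes> inv (inv y)" by (simp only: e)
    also have "\<dots> = z" by (rule conj_center[OF zZ inv_closed[OF yc]])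
    finally show False using aZ zZ by simp
  qed
  have it: "\<exists>w\<in>N. y [^] k \<otimes> a \<otimes> inv (y [^] k) = a [^] (s ^ k) \<otimes> w" for k :: nat
  proof (induction k)
    case 0 show ?case using ac N_one by (intro bexI[of _ "\<one>"]) simp_all
  next
    case (Suc k)
    then obtain w where w: "w \<in> N" and e: "y [^] k \<otimes> a \<otimes> inv (y [^] k) = a [^] (s ^ k) \<otimes> w" by blast
    have wc: "w \<in> carrier G" using w N_car by blast
    have wZ: "w \<in> center G" using w by blast
    have "y [^] Suc k \<otimes> a \<otimes> inv (y [^] Suc k) = (y \<otimes> y [^] k) \<otimes> a \<otimes> inv (y \<otimes> y [^] k)"
      using yc by (simp only: nat_pow_Suc2)
    also have "\<dots> = y \<otimes> (y [^] k \<otimes> a \<otimes> inv (y [^] k)) \<otimes> inv y"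
      by (rule conj_mult_l[OF yc nat_pow_closed[OF yc] ac])
    also have "\<dots> = y \<otimes> (a [^] (s ^ k) \<otimes> w) \<otimes> inv y" by (simp only: e)
    also have "\<dots> = y \<otimes> (w \<otimes> a [^] (s ^ k)) \<otimes> inv y"
      using center_comm[OF wZ nat_pow_closed[OF ac, of "s ^ k"]] by simp
    also have "\<dots> = w \<otimes> (y \<otimes> a [^] (s ^ k) \<otimes> inv y)"
      by (rule conj_center_mult[OF wZ yc nat_pow_closed[OF ac]])
    also have "\<dots> = w \<otimes> (y \<otimes> a \<otimes> inv y) [^] (s ^ k)"
      using conj_pow[OF yc ac, of "s ^ k"] by simp
    also have "\<dots> = w \<otimes> (a [^] s \<otimes> z) [^] (s ^ k)" by (simp only: sz)
    also have "\<dots> = w \<otimes> (z \<otimes> a [^] s) [^] (s ^ k)"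
      using center_comm[OF zZ nat_pow_closed[OF ac, of s]] by simp
    also have "\<dots> = w \<otimes> (z [^] (s ^ k) \<otimes> (a [^] s) [^] (s ^ k))"
      using pow_central[OF zZ nat_pow_closed[OF ac, of s], of "s ^ k"] by simp
    also have "\<dots> = w \<otimes> (z [^] (s ^ k) \<otimes> a [^] (s ^ Suc k))"
      using nat_pow_pow[OF ac, of s "s ^ k"] by simp
    also have "\<dots> = a [^] (s ^ Suc k) \<otimes> (w \<otimes> z [^] (s ^ k))"
      by (rule central_rearr[OF wZ center_closed(3)[OF zZ zZ] nat_pow_closed[OF ac]])
    finally show ?case using N_mult[OF w N_pow[OF s(2)]] by blast
  qed
  obtain w where w: "w \<in> N" and e: "y [^] (p ^ n) \<otimes> a \<otimes> inv (y [^] (p ^ n)) = a [^] (s ^ (p ^ n)) \<otimes> w"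
    using it by blast
  have wc: "w \<in> carrier G" using w N_car by blast
  define t where "t = s ^ (p ^ n) - 1"
  have t: "s ^ (p ^ n) = 1 + t" unfolding t_def using s0 by simp
  have "a \<otimes> \<one> = a \<otimes> (a [^] t \<otimes> w)"
  proof -
    have "a \<otimes> \<one> = a" using ac by simp
    also have "\<dots> = y [^] (p ^ n) \<otimes> a \<otimes> inv (y [^] (p ^ n))" using pow_pn[OF yc] ac by simp
    also have "\<dots> = a [^] (1 + t) \<otimes> w" using e t by simp
    also have "\<dots> = a \<otimes> (a [^] t \<otimes> w)"
      using nat_pow_mult[OF ac, of 1 t, symmetric] ac wc by (simp add: m_assoc)
    finally show ?thesis .
  qed
  then have "\<one> = a [^] t \<otimes> w" using ac wc by (metis l_cancel one_closed nat_pow_closed m_closed)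
  then have "a [^] t = inv w" using wc by (metis inv_equality nat_pow_closed[OF ac])
  then have "a [^] t \<in> N" using N_inv[OF w] by simp
  then have "p dvd t" using powN_iff m_eq by simp
  then have "s = 1" using fermat_one[OF pp _ s(1)] s0 unfolding t_def by simp
  then show ?thesis using sz s ac by auto
qed

lemma K:
  assumes yc: "y \<in> carrier G" and d: "d \<in> D"
  shows "\<exists>u\<in>N. y \<otimes> d \<otimes> inv y = d \<otimes> u"
proof -
  obtain i :: nat and z' where z': "z' \<in> N" and dz: "d = a [^] i \<otimes> z'" using D_decomp[OF d] by blast
  obtain z where z: "z \<in> N" and yz: "y \<otimes> a \<otimes> inv y = a \<otimes> z" using K_a[OF yc] by blast
  have z'Z: "z' \<in> center G" and zZ: "z \<in> center G" using z z' by blast+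
  have "y \<otimes> d \<otimes> inv y = y \<otimes> (z' \<otimes> a [^] i) \<otimes> inv y"
    using dz center_comm[OF z'Z nat_pow_closed[OF ac, of i]] by simp
  also have "\<dots> = z' \<otimes> (y \<otimes> a [^] i \<otimes> inv y)"
    by (rule conj_center_mult[OF z'Z yc nat_pow_closed[OF ac]])
  also have "\<dots> = z' \<otimes> (y \<otimes> a \<otimes> inv y) [^] i" using conj_pow[OF yc ac, of i] by simp
  also have "\<dots> = z' \<otimes> (a \<otimes> z) [^] i" by (simp only: yz)
  also have "\<dots> = z' \<otimes> (z \<otimes> a) [^] i" using center_comm[OF zZ ac] by simp
  also have "\<dots> = z' \<otimes> (z [^] i \<otimes> a [^] i)" using pow_central[OF zZ ac, of i] by simp
  also have "\<dots> = a [^] i \<otimes> (z' \<otimes> z [^] i)"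
    by (rule central_rearr[OF z'Z center_closed(3)[OF zZ zZ] nat_pow_closed[OF ac]])
  also have "\<dots> = d \<otimes> z [^] i" using dz z' z N_car ac by (simp add: m_assoc)
  finally show ?thesis using N_pow[OF z] by blast
qed

lemma K_comm:
  assumes yc: "y \<in> carrier G" and d: "d \<in> D"
  shows "y \<otimes> d \<otimes> inv y \<otimes> inv d \<in> N"
proof -
  obtain u where u: "u \<in> N" and e: "y \<otimes> d \<otimes> inv y = d \<otimes> u" using K[OF yc d] by blast
  have dc: "d \<in> carrier G" using d Dcar by blast
  have "y \<otimes> d \<otimes> inv y = u \<otimes> d" using e center_comm[of u d] u dc by simp
  then have "y \<otimes> d \<otimes> inv y \<otimes> inv d = u" by (rule conj_to_comm[OF yc dc N_car[OF u]])
  then show ?thesis using u by simp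
qed

lemma D_comm_a: "d \<in> D \<Longrightarrow> d \<otimes> a = a \<otimes> d"
proof -
  assume d: "d \<in> D"
  obtain i :: nat and z where z: "z \<in> N" and dz: "d = a [^] i \<otimes> z" using D_decomp[OF d] by blast
  have "a [^] i \<otimes> a = a \<otimes> a [^] i" using group_commutes_pow[of a a i] ac by simp
  moreover have "z \<otimes> a = a \<otimes> z" using center_comm[of z a] z ac by simp
  ultimately show ?thesis unfolding dz using comm_mult_g[OF nat_pow_closed[OF ac] N_car[OF z] ac] by simp
qed

lemma centr:
  assumes xc: "x \<in> carrier G" and xa: "x \<otimes> a = a \<otimes> x" and d: "d \<in> D"
  shows "d \<otimes> x = x \<otimes> d"
proof -
  obtain i :: nat and z where z: "z \<in> N" and dz: "d = a [^] i \<otimes> z" using D_decomp[OF d] by blast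
  have "a [^] i \<otimes> x = x \<otimes> a [^] i" using group_commutes_pow[of a x i] ac xc xa by simp
  moreover have "z \<otimes> x = x \<otimes> z" using center_comm[of z x] z xc by simp
  ultimately show ?thesis unfolding dz using comm_mult_g[OF nat_pow_closed[OF ac] N_car[OF z] xc] by simp
qed

lemma D_comm: "d \<in> D \<Longrightarrow> d' \<in> D \<Longrightarrow> d \<otimes> d' = d' \<otimes> d"
  using centr[of d' d] D_comm_a[of d'] Dcar by auto

lemma in_centralizer:
  assumes xc: "x \<in> carrier G" and xa: "x \<otimes> a = a \<otimes> x"
  shows "x \<in> centralizer G D"
proof -
  have "\<forall>y\<in>D. x \<otimes> y = y \<otimes> x" using centr[OF xc xa] by metis
  then show ?thesis unfolding centralizer_def using xc by blast
qed


lemma sup_dir: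
  assumes x: "x \<in> D <#> center G"
  shows "x \<in> center_star G \<inter> center_of G (centralizer G D)"
proof -
  obtain d z where d: "d \<in> D" and z: "z \<in> center G" and xdz: "x = d \<otimes> z"
    using x unfolding set_mult_def by blast
  have dc: "d \<in> carrier G" using d Dcar by blast
  have zc: "z \<in> carrier G" using z center_carr by blast
  have xc: "x \<in> carrier G" using xdz dc zc by simp
  have star: "x \<in> center_star G"
    unfolding center_star_def comm_set_def commutator_def
  proof (intro CollectI conjI subsetI xc)
    fix c assume "c \<in> {y \<otimes> x \<otimes> inv y \<otimes> inv x |y. y \<in> carrier G}"
    then obtain y where yc: "y \<in> carrier G" and c: "c = y \<otimes> x \<otimes> inv y \<otimes> inv x" by blast
    obtain u where u: "u \<in> N" and e: "y \<otimes> d \<otimes> inv y = d \<otimes> u" using K[OF yc d] by blast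
    have uZ: "u \<in> center G" and uc: "u \<in> carrier G" using u N_car by blast+
    have "y \<otimes> x \<otimes> inv y = (y \<otimes> d \<otimes> inv y) \<otimes> (y \<otimes> z \<otimes> inv y)"
      unfolding xdz by (rule conj_mult_r[OF yc dc zc])
    also have "\<dots> = (d \<otimes> u) \<otimes> z" using conj_center[OF z yc] e by simp
    also have "\<dots> = (u \<otimes> d) \<otimes> z" using center_comm[OF uZ dc] by simp
    also have "\<dots> = u \<otimes> x" unfolding xdz using uc dc zc by (simp add: m_assoc)
    finally have "y \<otimes> x \<otimes> inv y \<otimes> inv x = u" by (rule conj_to_comm[OF yc xc uc])
    then show "c \<in> center G" using c uZ by simp
  qed
  have xC: "x \<in> centralizer G D"
  proof -
    have "x \<otimes> w = w \<otimes> x" if w: "w \<in> D" for w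
    proof -
      have wc: "w \<in> carrier G" using w Dcar by blast
      show ?thesis unfolding xdz
        by (rule comm_mult_g[OF dc zc wc D_comm[OF d w] center_comm[OF z wc]])
    qed
    then show ?thesis unfolding centralizer_def using xc by blast
  qed
  have "x \<otimes> c = c \<otimes> x" if c: "c \<in> centralizer G D" for c
  proof -
    have cc: "c \<in> carrier G" and cd: "c \<otimes> d = d \<otimes> c" using c d unfolding centralizer_def by blast+
    show ?thesis unfolding xdz
      by (rule comm_mult_g[OF dc zc cc cd[symmetric] center_comm[OF z cc]])
  qed
  then have "x \<in> center_of G (centralizer G D)" unfolding center_of_def using xC by blast
  with star show ?thesis by blast
qed

lemma sub_dir:
  assumes xs: "x \<in> center_star G" and xz: "x \<in> center_of G (centralizer G D)"
  shows "x \<in> D <#> center G"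
proof -
  have xc: "x \<in> carrier G" using xs unfolding center_star_def by blast
  have xcomm: "\<And>c. c \<in> centralizer G D \<Longrightarrow> x \<otimes> c = c \<otimes> x" using xz unfolding center_of_def by blast
  have xstar: "\<And>y. y \<in> carrier G \<Longrightarrow> y \<otimes> x \<otimes> inv y \<otimes> inv x \<in> center G"
    using xs unfolding center_star_def comm_set_def commutator_def by blast
  have "\<exists>y\<in>carrier G. a \<otimes> y \<noteq> y \<otimes> a" using aZ ac unfolding center_of_def by blast
  then obtain y0 where y0: "y0 \<in> carrier G" and ny0: "a \<otimes> y0 \<noteq> y0 \<otimes> a" by blast
  have ny: "y0 \<otimes> a \<noteq> a \<otimes> y0" using ny0 by metis
  define c where "c = y0 \<otimes> a \<otimes> inv y0 \<otimes> inv a"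
  have cN: "c \<in> N" unfolding c_def by (rule K_comm[OF y0 aD])
  have cZ: "c \<in> center G" and cc: "c \<in> carrier G" using cN N_car by blast+
  have y0a: "y0 \<otimes> a \<otimes> inv y0 = c \<otimes> a" by (rule comm_to_conj[OF y0 ac cc c_def[symmetric]])
  have c1: "c \<noteq> \<one>"
  proof
    assume "c = \<one>"
    then have "y0 \<otimes> a \<otimes> inv y0 = a" using y0a ac by simp
    then show False using ny conj_fix_iff[OF y0 ac] by simp
  qed
  define e where "e = y0 \<otimes> x \<otimes> inv y0 \<otimes> inv x"
  have eN: "e \<in> N" unfolding e_def using xstar[OF y0] comm_D[OF y0 xc] by blast
  have eZ: "e \<in> center G" and ec: "e \<in> carrier G" using eN N_car by blast+
  have y0x: "y0 \<otimes> x \<otimes> inv y0 = e \<otimes> x" by (rule comm_to_conj[OF y0 xc ec e_def[symmetric]])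
  obtain k where "k < p" and ek: "e = c [^] k" using N_gen[OF cN c1 eN] by blast
  define w where "w = inv (a [^] k) \<otimes> x"
  have wc: "w \<in> carrier G" unfolding w_def using ac xc by simp
  have xw: "x = a [^] k \<otimes> w" unfolding w_def using ac xc by (simp add: m_assoc[symmetric])
  have wZ: "w \<in> center G"
  proof (rule center_I[OF wc])
    fix y assume yc: "y \<in> carrier G"
    define f where "f = y \<otimes> a \<otimes> inv y \<otimes> inv a"
    have fN: "f \<in> N" unfolding f_def by (rule K_comm[OF yc aD])
    obtain j where "j < p" and fj: "f = c [^] j" using N_gen[OF cN c1 fN] by blast
    have ya: "y \<otimes> a \<otimes> inv y = c [^] j \<otimes> a"
      by (rule comm_to_conj[OF yc ac nat_pow_closed[OF cc]]) (simp add: f_def[symmetric] fj)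
    define u where "u = y \<otimes> inv (y0 [^] j)"
    have uc: "u \<in> carrier G" unfolding u_def using yc y0 by simp
    have yu: "y = u \<otimes> y0 [^] j" unfolding u_def using yc y0 by (simp add: m_assoc)
    have y0j_a: "y0 [^] j \<otimes> a \<otimes> inv (y0 [^] j) = c [^] j \<otimes> a" by (rule conj_iter[OF y0 ac cZ y0a])
    have y0j_x: "y0 [^] j \<otimes> x \<otimes> inv (y0 [^] j) = e [^] j \<otimes> x" by (rule conj_iter[OF y0 xc eZ y0x])
    have cjZ: "c [^] j \<in> center G" using center_closed(3)[OF cZ cZ] .
    have ejZ: "e [^] j \<in> center G" using center_closed(3)[OF eZ eZ] .
    have "c [^] j \<otimes> a = y \<otimes> a \<otimes> inv y" using ya by simp
    also have "\<dots> = u \<otimes> (y0 [^] j \<otimes> a \<otimes> inv (y0 [^] j)) \<otimes> inv u"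
      unfolding yu by (rule conj_mult_l[OF uc nat_pow_closed[OF y0] ac])
    also have "\<dots> = u \<otimes> (c [^] j \<otimes> a) \<otimes> inv u" by (simp only: y0j_a)
    also have "\<dots> = c [^] j \<otimes> (u \<otimes> a \<otimes> inv u)" by (rule conj_center_mult[OF cjZ uc ac])
    finally have "c [^] j \<otimes> a = c [^] j \<otimes> (u \<otimes> a \<otimes> inv u)" .
    then have "u \<otimes> a \<otimes> inv u = a" using cc uc ac by (metis l_cancel nat_pow_closed m_closed inv_closed)
    then have "u \<otimes> a = a \<otimes> u" using conj_fix_iff[OF uc ac] by simp
    then have uC: "u \<in> centralizer G D" by (rule in_centralizer[OF uc])
    have uxfix: "u \<otimes> x \<otimes> inv u = x" using conj_fix_iff[OF uc xc] xcomm[OF uC] by simp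
    have yx: "y \<otimes> x \<otimes> inv y = c [^] (j * k) \<otimes> x"
    proof -
      have "y \<otimes> x \<otimes> inv y = u \<otimes> (y0 [^] j \<otimes> x \<otimes> inv (y0 [^] j)) \<otimes> inv u"
        unfolding yu by (rule conj_mult_l[OF uc nat_pow_closed[OF y0] xc])
      also have "\<dots> = u \<otimes> (e [^] j \<otimes> x) \<otimes> inv u" by (simp only: y0j_x)
      also have "\<dots> = e [^] j \<otimes> (u \<otimes> x \<otimes> inv u)" by (rule conj_center_mult[OF ejZ uc xc])
      also have "\<dots> = e [^] j \<otimes> x" by (simp only: uxfix)
      also have "\<dots> = c [^] (j * k) \<otimes> x" unfolding ek using nat_pow_pow[OF cc, of k j] by (simp add: mult.commute)
      finally show ?thesis .
    qed
    have yak: "y \<otimes> a [^] k \<otimes> inv y = c [^] (j * k) \<otimes> a [^] k"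
    proof -
      have "y \<otimes> a [^] k \<otimes> inv y = (y \<otimes> a \<otimes> inv y) [^] k" by (rule conj_pow[OF yc ac])
      also have "\<dots> = (c [^] j \<otimes> a) [^] k" by (simp only: ya)
      also have "\<dots> = (c [^] j) [^] k \<otimes> a [^] k" by (rule pow_central[OF cjZ ac])
      also have "\<dots> = c [^] (j * k) \<otimes> a [^] k" using nat_pow_pow[OF cc, of j k] by simp
      finally show ?thesis .
    qed
    have cjkc: "c [^] (j * k) \<in> carrier G" using cc by simp
    have "y \<otimes> w \<otimes> inv y = (y \<otimes> inv (a [^] k) \<otimes> inv y) \<otimes> (y \<otimes> x \<otimes> inv y)"
      unfolding w_def by (rule conj_mult_r[OF yc inv_closed[OF nat_pow_closed[OF ac]] xc])
    also have "\<dots> = inv (y \<otimes> a [^] k \<otimes> inv y) \<otimes> (y \<otimes> x \<otimes> inv y)"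
      using conj_inv[OF yc nat_pow_closed[OF ac, of k]] by simp
    also have "\<dots> = inv (c [^] (j * k) \<otimes> a [^] k) \<otimes> (c [^] (j * k) \<otimes> x)" by (simp only: yx yak)
    also have "\<dots> = w" unfolding w_def using cjkc ac xc
      by (simp add: inv_mult_group m_assoc cancel1)
    finally have "y \<otimes> w \<otimes> inv y = w" .
    then have "y \<otimes> w = w \<otimes> y" using conj_fix_iff[OF yc wc] by simp
    then show "w \<otimes> y = y \<otimes> w" by simp
  qed
  have "a [^] k \<in> D" using sub_pow_closed[OF subD aD] .
  then show ?thesis unfolding set_mult_def using xw wZ by blast
qed

lemma main: "center_star G \<inter> center_of G (centralizer G D) = D <#> center G"
  using sup_dir sub_dir by blast

end

theorem lemma3p4:
  fixes G :: "('a, 'b) monoid_scheme" and p :: nat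
  assumes "Factorial_Ring.prime p"
    and "p_group p G"
    and "card (commutator_subgroup G \<inter> center G) = p"
    and "card (commutator_subgroup G) = p ^ 2"
  shows "center_star G \<inter> center_of G (centralizer G (commutator_subgroup G))
           = commutator_subgroup G <#>\<^bsub>G\<^esub> center G"
proof -
  have g: "group G" and fin: "finite (carrier G)" and "\<exists>n. order G = p ^ n"
    using assms(2) unfolding p_group_def by auto
  then obtain n where o: "order G = p ^ n" by blast
  interpret L: L3 G p n
    unfolding L3_def L3_axioms_def using g fin o assms(1,3,4) by blast
  obtain a where a: "a \<in> commutator_subgroup G" "a \<notin> center G" using L.exists_a by blast
  interpret La: L3a G p n a
    unfolding L3a_def L3a_axioms_def using L.L3_axioms a by blast
  show ?thesis by (rule La.main)
qed

end
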